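(* Let $M\ge2$, $\kappa>0$ and $0<p_1<p_2<\cdots<p_M$. For $i=1,\dots,M$ define $\eta_i(c)=c\log p_i-\log(1+\kappa p_i^{-1})$ for $c\in\mathbb R$, and for $i\neq j$ let $$c_{i,j}=\frac{\log(1+\kappa p_i^{-1})-\log(1+\kappa p_j^{-1})}{\log p_i-\log p_j},$$ so that $\eta_i(c_{i,j})=\eta_j(c_{i,j})$. For $i<j$ let $\sigma_{i,j}=|\{l:\ \eta_l(c_{i,j})<\eta_i(c_{i,j})=\eta_j(c_{i,j})\}|$ and $I(s)=\{(i,j):1\le i<j\le M,\ \sigma_{i,j}=s\}$. Then for every $0\le s\le M-2$, $$I(s)=\{(i,\,M-s+i-1):\ i=1,\dots,s+1\}.$$ *)

theory Defs
  imports Complex_Main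
begin

definition eta :: "real \<Rightarrow> (nat \<Rightarrow> real) \<Rightarrow> nat \<Rightarrow> real \<Rightarrow> real" where
  "eta \<kappa> p i c = c * ln (p i) - ln (1 + \<kappa> * inverse (p i))"

definition crit :: "real \<Rightarrow> (nat \<Rightarrow> real) \<Rightarrow> nat \<Rightarrow> nat \<Rightarrow> real" where
  "crit \<kappa> p i j =
     (ln (1 + \<kappa> * inverse (p i)) - ln (1 + \<kappa> * inverse (p j))) / (ln (p i) - ln (p j))"

definition sigma :: "nat \<Rightarrow> real \<Rightarrow> (nat \<Rightarrow> real) \<Rightarrow> nat \<Rightarrow> nat \<Rightarrow> nat" where
  "sigma M \<kappa> p i j =
     card {l \<in> {1..M}. eta \<kappa> p l (crit \<kappa> p i j) < eta \<kappa> p i (crit \<kappa> p i j)}"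

definition Iset :: "nat \<Rightarrow> real \<Rightarrow> (nat \<Rightarrow> real) \<Rightarrow> nat \<Rightarrow> (nat \<times> nat) set" where
  "Iset M \<kappa> p s = {(i, j). 1 \<le> i \<and> i < j \<and> j \<le> M \<and> sigma M \<kappa> p i j = s}"

end

theory Submission
  imports Defs
begin

definition FF :: "real \<Rightarrow> real \<Rightarrow> real" where
  "FF k x = ln (1 + k * exp (- x))"

lemma FF_deriv:
  assumes "k > 0"
  shows "(FF k has_real_derivative (- k / (exp x + k))) (at x)"
proof -
  have pos: "1 + k * exp (- x) > 0" using assms by (simp add: add_pos_pos)
  have "((\<lambda>x. ln (1 + k * exp (- x))) has_real_derivative
        (k * (exp (- x) * (- 1))) / (1 + k * exp (- x))) (at x)"
    by (rule derivative_eq_intros refl | use pos in simp)+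
  moreover have "(k * (exp (- x) * (- 1))) / (1 + k * exp (- x)) = - k / (exp x + k)"
  proof -
    have "exp x * exp (-x) = 1" by (simp add: exp_minus)
    then show ?thesis using pos
      by (simp add: field_simps exp_minus)
  qed
  ultimately show ?thesis unfolding FF_def by simp
qed

lemma FF_slope:
  assumes k: "k > 0" and "a < b" "b < c"
  shows "(FF k b - FF k a) / (b - a) < (FF k c - FF k b) / (c - b)"
proof -
  obtain z1 where z1: "a < z1" "z1 < b" "FF k b - FF k a = (b - a) * (- k / (exp z1 + k))"
    using MVT2[OF \<open>a < b\<close>, of "FF k" "\<lambda>x. - k / (exp x + k)"] FF_deriv[OF k] by blast
  obtain z2 where z2: "b < z2" "z2 < c" "FF k c - FF k b = (c - b) * (- k / (exp z2 + k))"
    using MVT2[OF \<open>b < c\<close>, of "FF k" "\<lambda>x. - k / (exp x + k)"] FF_deriv[OF k] by blast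
  have "exp z1 < exp z2" using z1 z2 by simp
  hence "k / (exp z2 + k) < k / (exp z1 + k)"
    using k by (intro divide_strict_left_mono) (auto simp: add_pos_pos)
  then show ?thesis using z1 z2 \<open>a < b\<close> \<open>b < c\<close> by simp
qed

lemma key:
  assumes k: "k > 0" and ab: "a < b" and C: "C = (FF k a - FF k b) / (a - b)"
  shows "(C * x - FF k x < C * a - FF k a) \<longleftrightarrow> (x < a \<or> b < x)"
proof -
  have C': "C = (FF k b - FF k a) / (b - a)" using C
    by (metis minus_diff_eq minus_divide_divide)
  have Cb: "FF k b - FF k a = C * (b - a)" using C' ab by simp
  consider "x < a" | "x = a" | "a < x \<and> x < b" | "x = b" | "b < x" by linarith
  then show ?thesis
  proof cases
    case 1
    have s: "(FF k a - FF k x) / (a - x) < C" using FF_slope[OF k 1 ab] C' by simp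
    have "FF k a - FF k x < C * (a - x)" using s 1 by (simp add: pos_divide_less_eq)
    then show ?thesis using 1 by (simp add: algebra_simps)
  next
    case 2 then show ?thesis using ab by simp
  next
    case 3
    have s: "(FF k x - FF k a) / (x - a) < (FF k b - FF k x) / (b - x)"
      using FF_slope[OF k] 3 by blast
    define u where "u = FF k x - FF k a"
    define v where "v = FF k b - FF k x"
    have uv: "u + v = C * (b - a)" using Cb u_def v_def by simp
    have "u * (b - x) < v * (x - a)" using s 3 unfolding u_def[symmetric] v_def[symmetric]
      by (simp add: divide_less_eq less_divide_eq field_simps)
    hence "u * (b - x) + u * (x - a) < v * (x - a) + u * (x - a)" by simp
    hence "u * (b - a) < (u + v) * (x - a)" by (simp add: algebra_simps)
    hence "u * (b - a) < C * (x - a) * (b - a)" using uv by (simp add: algebra_simps)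
    hence "u < C * (x - a)" using ab by simp
    then show ?thesis using 3 unfolding u_def by (simp add: algebra_simps)
  next
    case 4 then show ?thesis using ab Cb by (simp add: algebra_simps)
  next
    case 5
    have s: "C < (FF k x - FF k b) / (x - b)" using FF_slope[OF k ab 5] C' by simp
    have "C * (x - b) < FF k x - FF k b" using s 5 by (simp add: less_divide_eq)
    then have "C * x - FF k x < C * a - FF k a" using Cb by (simp add: algebra_simps)
    then show ?thesis using 5 by simp
  qed
qed

theorem lemma4:
  fixes M :: nat and \<kappa> :: real and p :: "nat \<Rightarrow> real" and s :: nat
  assumes "M \<ge> 2" and "\<kappa> > 0"
    and "p 1 > 0"
    and "\<And>i. 1 \<le> i \<Longrightarrow> i < M \<Longrightarrow> p i < p (i + 1)"
    and "s \<le> M - 2"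
  shows "Iset M \<kappa> p s = {(i, M - s + i - 1) | i. 1 \<le> i \<and> i \<le> s + 1}"
proof -
  have mono: "p l < p m" if "1 \<le> l" "l < m" "m \<le> M" for l m
    using that
  proof (induction m rule: nat_less_induct)
    case (1 m)
    then obtain m' where m: "m = Suc m'" by (cases m) auto
    have step: "p m' < p m" using assms(4)[of m'] 1 m by simp
    show ?case
    proof (cases "l = m'")
      case True then show ?thesis using step by simp
    next
      case False
      then have "p l < p m'" using 1 m by auto
      then show ?thesis using step by simp
    qed
  qed
  have pos: "p l > 0" if "1 \<le> l" "l \<le> M" for l
  proof (cases "l = 1")
    case True then show ?thesis using assms(3) by simp
  next
    case False then show ?thesis using mono[of 1 l] that assms(3) by simp
  qed
  define x where "x l = ln (p l)" for l
  have xmono: "x l < x m \<longleftrightarrow> l < m" if "1 \<le> l" "l \<le> M" "1 \<le> m" "m \<le> M" for l m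
  proof
    assume "l < m" then show "x l < x m" using mono[of l m] pos that unfolding x_def by simp
  next
    assume h: "x l < x m"
    show "l < m"
    proof (rule ccontr)
      assume "\<not> l < m"
      then have "m = l \<or> m < l" by auto
      then have "x m \<le> x l" using mono[of m l] pos that unfolding x_def by auto
      then show False using h by simp
    qed
  qed
  have inv: "inverse (p l) = exp (- x l)" if "1 \<le> l" "l \<le> M" for l
    using pos[OF that] unfolding x_def by (simp add: exp_minus)
  have eta_eq: "eta \<kappa> p l c = c * x l - FF \<kappa> (x l)" if "1 \<le> l" "l \<le> M" for l c
    unfolding eta_def FF_def using inv[OF that] x_def by simp
  have crit_eq: "crit \<kappa> p i j = (FF \<kappa> (x i) - FF \<kappa> (x j)) / (x i - x j)"
    if "1 \<le> i" "i \<le> M" "1 \<le> j" "j \<le> M" for i j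
    unfolding crit_def FF_def using inv that x_def by simp
  have sig: "sigma M \<kappa> p i j = (i - 1) + (M - j)" if ij: "1 \<le> i" "i < j" "j \<le> M" for i j
  proof -
    have "{l \<in> {1..M}. eta \<kappa> p l (crit \<kappa> p i j) < eta \<kappa> p i (crit \<kappa> p i j)}
        = {1..<i} \<union> {j<..M}"
    proof (intro set_eqI iffI)
      fix l assume "l \<in> {l \<in> {1..M}. eta \<kappa> p l (crit \<kappa> p i j) < eta \<kappa> p i (crit \<kappa> p i j)}"
      then have l: "1 \<le> l" "l \<le> M" and
        lt: "eta \<kappa> p l (crit \<kappa> p i j) < eta \<kappa> p i (crit \<kappa> p i j)" by auto
      have "x l < x i \<or> x j < x l"
        using key[OF assms(2), of "x i" "x j" "crit \<kappa> p i j" "x l"] lt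
          eta_eq l ij crit_eq xmono[of i j] by simp
      then show "l \<in> {1..<i} \<union> {j<..M}" using xmono l ij by auto
    next
      fix l assume "l \<in> {1..<i} \<union> {j<..M}"
      then have l: "1 \<le> l" "l \<le> M" and o: "l < i \<or> j < l" using ij by auto
      have "x l < x i \<or> x j < x l" using o xmono l ij by auto
      then have "eta \<kappa> p l (crit \<kappa> p i j) < eta \<kappa> p i (crit \<kappa> p i j)"
        using key[OF assms(2), of "x i" "x j" "crit \<kappa> p i j" "x l"]
          eta_eq l ij crit_eq xmono[of i j] by simp
      then show "l \<in> {l \<in> {1..M}. eta \<kappa> p l (crit \<kappa> p i j) < eta \<kappa> p i (crit \<kappa> p i j)}"
        using l by auto
    qed
    moreover have "card ({1..<i} \<union> {j<..M}) = (i - 1) + (M - j)"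
      by (subst card_Un_disjoint) (use ij in auto)
    ultimately show ?thesis unfolding sigma_def by simp
  qed
  show ?thesis
  proof (intro set_eqI iffI)
    fix z assume "z \<in> Iset M \<kappa> p s"
    then obtain i j where z: "z = (i, j)" "1 \<le> i" "i < j" "j \<le> M" "sigma M \<kappa> p i j = s"
      unfolding Iset_def by auto
    then have "s = (i - 1) + (M - j)" using sig by simp
    then show "z \<in> {(i, M - s + i - 1) | i. 1 \<le> i \<and> i \<le> s + 1}" using z by auto
  next
    fix z assume "z \<in> {(i, M - s + i - 1) | i. 1 \<le> i \<and> i \<le> s + 1}"
    then obtain i where z: "z = (i, M - s + i - 1)" "1 \<le> i" "i \<le> s + 1" by auto
    have c: "i < M - s + i - 1" "M - s + i - 1 \<le> M" using z assms(1,5) by auto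
    have "sigma M \<kappa> p i (M - s + i - 1) = s" using sig[OF z(2) c] z assms(1,5) by simp
    then show "z \<in> Iset M \<kappa> p s" using z c unfolding Iset_def by auto
  qed
qed

end
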